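(* Let $\Phi\in\mathcal{C}^2(\mathbb{R}^d)$ be bounded below and satisfy $x\cdot\nabla\Phi(x)\ge\gamma_1|x|^2+\gamma_2\Phi(x)-A$ for all $x\in\mathbb{R}^d$, for some positive constants $\gamma_1,\gamma_2,A$. Let \[V(x,v)=1+\Phi(x)+\tfrac12|v|^2+\tfrac14x\cdot v+\tfrac18|x|^2.\] Then there exist $\lambda>0$ and $K\ge0$ such that $\mathcal{U}V\le-\lambda V+K$, where $\mathcal{U}\phi=v\cdot\nabla_x\phi-\nabla_x\Phi\cdot\nabla_v\phi+\mathcal{L}^*\phi$ and $\mathcal{L}^*\phi(x,v)=\int_{\mathbb{R}^d}\phi(x,u)\mathcal{M}(u)\,\mathrm{d}u-\phi(x,v)$. Consequently, for every $t_*>0$, the Markov semigroup $(\mathcal{P}_t)$ of the linear relaxation Boltzmann equation $\partial_tf+v\cdot\nabla_xf-\nabla\Phi\cdot\nabla_vf=(\int f\,\mathrm{d}u)\mathcal{M}-f$ satisfies $\int Vf_{t_*}\le e^{-\lambda t_*}\int Vf_0+K/\lambda$ for all initial probability measures $f_0$ (i.e. $\mathcal{P}^*_{t_*}V\le e^{-\lambda t_*}V+K/\lambda$).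
   Context: $\mathcal{M}(v)=(2\pi)^{-d/2}e^{-|v|^2/2}$. $\mathcal{P}^*_t$ denotes the dual action of the semigroup on observables, $(\mathcal{P}^*_t\psi)(z)=\int\psi(y)S_t(z,\mathrm{d}y)$ with $S_t$ the transition kernel; $\mathcal{U}$ is its generator (forwards operator). *)

theory Defs
  imports "HOL-Analysis.Analysis"
begin

definition Maxw :: "'a::euclidean_space \<Rightarrow> real" where
  "Maxw u = (2 * pi) powr (- real DIM('a) / 2) * exp (- (norm u * norm u) / 2)"

definition Lstar :: "('a::euclidean_space \<times> 'a \<Rightarrow> real) \<Rightarrow> 'a \<times> 'a \<Rightarrow> real" where
  "Lstar \<phi> = (\<lambda>(x, v). (\<integral>u. \<phi> (x, u) * Maxw u \<partial>lborel) - \<phi> (x, v))"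

text \<open>U phi = v . grad_x phi - grad Phi . grad_v phi + L* phi; the transport part is the
  Frechet derivative of phi at (x,v) in direction (v, - grad Phi x).\<close>
definition Ugen :: "('a::euclidean_space \<Rightarrow> 'a) \<Rightarrow> ('a \<times> 'a \<Rightarrow> real) \<Rightarrow> 'a \<times> 'a \<Rightarrow> real" where
  "Ugen gradPhi \<phi> = (\<lambda>(x, v). frechet_derivative \<phi> (at (x, v)) (v, - gradPhi x) + Lstar \<phi> (x, v))"

definition is_flow :: "('a::euclidean_space \<Rightarrow> 'a) \<Rightarrow> (real \<Rightarrow> 'a \<times> 'a \<Rightarrow> 'a \<times> 'a) \<Rightarrow> bool" where
  "is_flow gradPhi \<Psi> \<longleftrightarrow> (\<forall>z. \<Psi> 0 z = z \<and>
     (\<forall>t\<ge>0. ((\<lambda>s. \<Psi> s z) has_vector_derivative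
               (snd (\<Psi> t z), - gradPhi (fst (\<Psi> t z)))) (at t within {0..})))"

text \<open>Dyson (Duhamel) series terms for the dual semigroup: jumps at rate 1 to a fresh
  velocity drawn from M, deterministic flow Psi in between.\<close>
primrec dyson :: "(real \<Rightarrow> 'a \<times> 'a \<Rightarrow> 'a \<times> 'a) \<Rightarrow> nat \<Rightarrow> real \<Rightarrow> ('a::euclidean_space \<times> 'a \<Rightarrow> ennreal)
    \<Rightarrow> 'a \<times> 'a \<Rightarrow> ennreal" where
  "dyson \<Psi> 0 = (\<lambda>t \<phi> z. \<phi> (\<Psi> t z))"
| "dyson \<Psi> (Suc n) = (\<lambda>t \<phi> z.
     \<integral>\<^sup>+ s \<in> {0..t}. (\<integral>\<^sup>+ u. dyson \<Psi> n (t - s) \<phi> (fst (\<Psi> s z), u) * ennreal (Maxw u) \<partial>lborel) \<partial>lborel)"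

definition Pplus :: "(real \<Rightarrow> 'a \<times> 'a \<Rightarrow> 'a \<times> 'a) \<Rightarrow> real \<Rightarrow> ('a::euclidean_space \<times> 'a \<Rightarrow> ennreal)
    \<Rightarrow> 'a \<times> 'a \<Rightarrow> ennreal" where
  "Pplus \<Psi> t \<phi> z = ennreal (exp (- t)) * (\<Sum>n. dyson \<Psi> n t \<phi> z)"

definition Pdual :: "(real \<Rightarrow> 'a \<times> 'a \<Rightarrow> 'a \<times> 'a) \<Rightarrow> real \<Rightarrow> ('a::euclidean_space \<times> 'a \<Rightarrow> real)
    \<Rightarrow> 'a \<times> 'a \<Rightarrow> real" where
  "Pdual \<Psi> t \<phi> z = enn2real (Pplus \<Psi> t (\<lambda>y. ennreal (\<phi> y)) z)
                    - enn2real (Pplus \<Psi> t (\<lambda>y. ennreal (- \<phi> y)) z)"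

end

theory Submission
  imports Defs "HOL-Probability.Probability"
begin
lemma nn_cmult_le: "c * integral\<^sup>N M f \<le> (\<integral>\<^sup>+x. c * f x \<partial>M)"
  unfolding nn_integral_def SUP_mult_left_ennreal
proof (rule SUP_least)
  fix g assume g: "g \<in> {g. simple_function M g \<and> g \<le> f}"
  then have "c * integral\<^sup>S M g = integral\<^sup>S M (\<lambda>x. c * g x)" by simp
  also have "\<dots> \<le> (SUP g \<in> {g. simple_function M g \<and> g \<le> (\<lambda>x. c * f x)}. integral\<^sup>S M g)"
    using g by (intro SUP_upper) (auto simp: le_fun_def intro: mult_left_mono)
  finally show "c * integral\<^sup>S M g \<le> \<dots>" .
qed

lemma nn_add_le: "integral\<^sup>N M f + integral\<^sup>N M g \<le> (\<integral>\<^sup>+x. f x + g x \<partial>M)"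
proof -
  let ?S = "\<lambda>f. {g. simple_function M g \<and> g \<le> f}"
  have ne: "?S h \<noteq> {}" for h :: "_ \<Rightarrow> ennreal"
  proof -
    have "(\<lambda>_. 0) \<in> ?S h" by (auto simp: le_fun_def)
    then show ?thesis by blast
  qed
  have "integral\<^sup>N M f + integral\<^sup>N M g = (SUP b\<in>?S g. SUP a\<in>?S f. integral\<^sup>S M a + integral\<^sup>S M b)"
    unfolding nn_integral_def
    by (simp add: ennreal_SUP_add_left[OF ne, symmetric] ennreal_SUP_add_right[OF ne])
  also have "\<dots> \<le> (\<integral>\<^sup>+x. f x + g x \<partial>M)"
  proof (intro SUP_least)
    fix b a assume b: "b \<in> ?S g" and a: "a \<in> ?S f"
    then have "integral\<^sup>S M a + integral\<^sup>S M b = integral\<^sup>S M (\<lambda>x. a x + b x)" by simp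
    also have "\<dots> \<le> (\<integral>\<^sup>+x. f x + g x \<partial>M)" unfolding nn_integral_def
      using a b by (intro SUP_upper) (auto simp: le_fun_def intro: add_mono)
    finally show "integral\<^sup>S M a + integral\<^sup>S M b \<le> (\<integral>\<^sup>+x. f x + g x \<partial>M)" .
  qed
  finally show ?thesis .
qed

lemma nn_sum_le: "finite I \<Longrightarrow> (\<Sum>i\<in>I. integral\<^sup>N M (f i)) \<le> (\<integral>\<^sup>+x. (\<Sum>i\<in>I. f i x) \<partial>M)"
proof (induction I rule: finite_induct)
  case (insert i I)
  have "(\<Sum>i\<in>insert i I. integral\<^sup>N M (f i)) = integral\<^sup>N M (f i) + (\<Sum>i\<in>I. integral\<^sup>N M (f i))"
    using insert by simp
  also have "\<dots> \<le> integral\<^sup>N M (f i) + (\<integral>\<^sup>+x. (\<Sum>i\<in>I. f i x) \<partial>M)"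
    using insert by (intro add_left_mono)
  also have "\<dots> \<le> (\<integral>\<^sup>+x. f i x + (\<Sum>i\<in>I. f i x) \<partial>M)" by (rule nn_add_le)
  finally show ?case using insert by simp
qed simp

lemma sum_Basis_inner: "b' \<in> Basis \<Longrightarrow> (\<Sum>b\<in>Basis. f b *\<^sub>R b) \<bullet> (b'::'a::euclidean_space) = f b'"
  by (simp add: inner_sum_left inner_Basis if_distrib sum.delta cong: if_cong)

lemma lborel_prod_integral:
  fixes h :: "'a::euclidean_space \<Rightarrow> real \<Rightarrow> real"
  assumes h: "\<And>b. b \<in> Basis \<Longrightarrow> integrable lborel (h b)"
  shows "integrable (lborel::'a measure) (\<lambda>u. \<Prod>b\<in>Basis. h b (u \<bullet> b))"
    and "(\<integral>u. (\<Prod>b\<in>Basis. h b (u \<bullet> b)) \<partial>(lborel::'a measure)) = (\<Prod>b\<in>Basis. \<integral>x. h b x \<partial>lborel)"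
proof -
  interpret product_sigma_finite "\<lambda>_::'a. lborel::real measure" by standard
  have meas: "(\<lambda>f. \<Sum>b\<in>Basis. f b *\<^sub>R b) \<in> measurable (Pi\<^sub>M Basis (\<lambda>_. lborel)) (borel::'a measure)"
    by measurable
  have hm: "b \<in> Basis \<Longrightarrow> h b \<in> borel_measurable borel" for b
    using h[of b] by (simp add: borel_measurable_integrable)
  have gm: "(\<lambda>u::'a. \<Prod>b\<in>Basis. h b (u \<bullet> b)) \<in> borel_measurable borel"
    by (intro borel_measurable_prod measurable_compose[OF _ hm]) auto
  have eq: "\<And>f. f \<in> space (Pi\<^sub>M Basis (\<lambda>_. lborel)) \<Longrightarrow>
     (\<Prod>b\<in>Basis. h b ((\<Sum>b\<in>Basis. f b *\<^sub>R b) \<bullet> b)) = (\<Prod>b\<in>Basis. h b (f b))"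
    by (intro prod.cong refl) (simp add: sum_Basis_inner)
  have "integrable (Pi\<^sub>M Basis (\<lambda>_. lborel)) (\<lambda>f. \<Prod>b\<in>Basis. h b (f b))"
    by (intro product_integrable_prod h) auto
  then show "integrable (lborel::'a measure) (\<lambda>u. \<Prod>b\<in>Basis. h b (u \<bullet> b))"
    by (subst lborel_eq, subst integrable_distr_eq[OF meas gm]) (simp add: Bochner_Integration.integrable_cong[OF refl eq])
  have "(\<integral>u. (\<Prod>b\<in>Basis. h b (u \<bullet> b)) \<partial>(lborel::'a measure))
     = (\<integral>f. (\<Prod>b\<in>Basis. h b ((\<Sum>b\<in>Basis. f b *\<^sub>R b) \<bullet> b)) \<partial>(Pi\<^sub>M Basis (\<lambda>_. lborel)))"
    by (subst lborel_eq, subst integral_distr[OF meas gm]) simp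
  also have "\<dots> = (\<integral>f. (\<Prod>b\<in>Basis. h b (f b)) \<partial>(Pi\<^sub>M Basis (\<lambda>_. lborel)))"
    by (intro Bochner_Integration.integral_cong refl eq)
  also have "\<dots> = (\<Prod>b\<in>Basis. \<integral>x. h b x \<partial>lborel)"
    by (intro product_integral_prod h) auto
  finally show "(\<integral>u. (\<Prod>b\<in>Basis. h b (u \<bullet> b)) \<partial>(lborel::'a measure)) = (\<Prod>b\<in>Basis. \<integral>x. h b x \<partial>lborel)" .
qed

lemma Maxw_prod: "Maxw (u::'a::euclidean_space) = (\<Prod>b\<in>Basis. std_normal_density (u \<bullet> b))"
proof -
  have n: "norm u * norm u = (\<Sum>b\<in>Basis. (u \<bullet> b)\<^sup>2)"
  proof -
    have "norm u * norm u = u \<bullet> u" by (simp add: power2_norm_eq_inner[symmetric] power2_eq_square)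
    then show ?thesis by (simp add: euclidean_inner[of u u] power2_eq_square)
  qed
  have c: "(2 * pi) powr (- real DIM('a) / 2) = (1 / sqrt (2 * pi)) ^ DIM('a)"
    by (simp add: powr_minus_divide powr_half_sqrt[symmetric] powr_realpow[symmetric] powr_powr
        power_one_over divide_inverse[symmetric])
  show ?thesis
    unfolding Maxw_def std_normal_density_def prod.distrib n c
    by (simp add: exp_sum[symmetric] sum_negf sum_divide_distrib)
qed

lemma Maxw_nonneg: "0 \<le> Maxw u" by (simp add: Maxw_def)

lemma prod_modify:
  assumes "b0 \<in> (Basis::'a::euclidean_space set)"
  shows "g (u \<bullet> b0) * (\<Prod>b\<in>Basis. f (u \<bullet> b)) = (\<Prod>b\<in>Basis. (if b = b0 then (\<lambda>x. f x * g x) else f) (u \<bullet> b))"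
proof -
  have "(\<Prod>b\<in>Basis - {b0}. (if b = b0 then (\<lambda>x. f x * g x) else f) (u \<bullet> b))
     = (\<Prod>b\<in>Basis - {b0}. f (u \<bullet> b))" by (rule prod.cong) auto
  then have "(\<Prod>b\<in>Basis. (if b = b0 then (\<lambda>x. f x * g x) else f) (u \<bullet> b))
      = f (u \<bullet> b0) * g (u \<bullet> b0) * (\<Prod>b\<in>Basis - {b0}. f (u \<bullet> b))"
    using assms by (simp add: prod.remove[of Basis b0])
  moreover have "(\<Prod>b\<in>Basis. f (u \<bullet> b)) = f (u \<bullet> b0) * (\<Prod>b\<in>Basis - {b0}. f (u \<bullet> b))"
    using assms by (simp add: prod.remove[of Basis b0])
  ultimately show ?thesis by (simp add: mult_ac)
qed

lemma prod_modify_int: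
  assumes "b0 \<in> (Basis::'a::euclidean_space set)"
  shows "(\<Prod>b\<in>Basis. \<integral>x. (if b = b0 then (\<lambda>x. f x * g x) else f) x \<partial>lborel)
     = (\<integral>x. f x * g x \<partial>lborel) * (\<integral>x. f x \<partial>lborel) ^ (DIM('a) - 1)"
proof -
  have "(\<Prod>b\<in>Basis - {b0}. \<integral>x. (if b = b0 then (\<lambda>x. f x * g x) else f) x \<partial>lborel)
     = (\<Prod>b\<in>Basis - {b0}. \<integral>x. f x \<partial>lborel)" by (rule prod.cong) auto
  then show ?thesis using assms by (simp add: prod.remove[of Basis b0])
qed

lemma Maxw_int: "integrable lborel (Maxw :: 'a::euclidean_space \<Rightarrow> real)"
  "(\<integral>u. Maxw u \<partial>(lborel::'a measure)) = 1"
  using lborel_prod_integral[of "\<lambda>_. std_normal_density"] by (simp_all add: Maxw_prod[abs_def])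

lemma Maxw_int1:
  assumes b0: "b0 \<in> (Basis::'a::euclidean_space set)"
  shows "integrable lborel (\<lambda>u::'a. (u \<bullet> b0) * Maxw u)" "(\<integral>u. (u \<bullet> b0) * Maxw (u::'a) \<partial>lborel) = 0"
proof -
  let ?h = "\<lambda>b. if b = b0 then (\<lambda>x. std_normal_density x * x) else std_normal_density"
  have hi: "b \<in> Basis \<Longrightarrow> integrable lborel (?h b)" for b
    using std_normal_moment_odd[of 0] by (auto intro: has_bochner_integral.intros(1) integrable.intros)
  have e: "(u \<bullet> b0) * Maxw u = (\<Prod>b\<in>Basis. ?h b (u \<bullet> b))" for u :: 'a
    unfolding Maxw_prod by (rule prod_modify[OF b0, of "\<lambda>x. x"])
  show "integrable lborel (\<lambda>u::'a. (u \<bullet> b0) * Maxw u)"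
    unfolding e by (rule lborel_prod_integral(1)[OF hi])
  show "(\<integral>u. (u \<bullet> b0) * Maxw (u::'a) \<partial>lborel) = 0"
  proof -
    have "(\<integral>u. (u \<bullet> b0) * Maxw (u::'a) \<partial>lborel) = (\<integral>u. (\<Prod>b\<in>Basis. ?h b (u \<bullet> b)) \<partial>lborel)"
      by (simp only: e)
    also have "\<dots> = (\<Prod>b\<in>Basis. \<integral>x. ?h b x \<partial>lborel)" by (rule lborel_prod_integral(2)[OF hi])
    also have "\<dots> = (\<integral>x. std_normal_density x * x \<partial>lborel) * (\<integral>x. std_normal_density x \<partial>lborel) ^ (DIM('a) - 1)"
      by (rule prod_modify_int[OF b0, of std_normal_density "\<lambda>x. x"])
    finally show ?thesis using integral_std_normal_moment_odd[of 0] by simp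
  qed
qed

lemma Maxw_int2:
  assumes b0: "b0 \<in> (Basis::'a::euclidean_space set)"
  shows "integrable lborel (\<lambda>u::'a. (u \<bullet> b0)\<^sup>2 * Maxw u)" "(\<integral>u. (u \<bullet> b0)\<^sup>2 * Maxw (u::'a) \<partial>lborel) = 1"
proof -
  let ?h = "\<lambda>b. if b = b0 then (\<lambda>x. std_normal_density x * x\<^sup>2) else std_normal_density"
  have hi: "b \<in> Basis \<Longrightarrow> integrable lborel (?h b)" for b
    using integrable_std_normal_moment[of 2] by auto
  have e: "(u \<bullet> b0)\<^sup>2 * Maxw u = (\<Prod>b\<in>Basis. ?h b (u \<bullet> b))" for u :: 'a
    unfolding Maxw_prod by (rule prod_modify[OF b0, of "\<lambda>x. x\<^sup>2"])
  show "integrable lborel (\<lambda>u::'a. (u \<bullet> b0)\<^sup>2 * Maxw u)"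
    unfolding e by (rule lborel_prod_integral(1)[OF hi])
  show "(\<integral>u. (u \<bullet> b0)\<^sup>2 * Maxw (u::'a) \<partial>lborel) = 1"
  proof -
    have "(\<integral>u. (u \<bullet> b0)\<^sup>2 * Maxw (u::'a) \<partial>lborel) = (\<integral>u. (\<Prod>b\<in>Basis. ?h b (u \<bullet> b)) \<partial>lborel)"
      by (simp only: e)
    also have "\<dots> = (\<Prod>b\<in>Basis. \<integral>x. ?h b x \<partial>lborel)" by (rule lborel_prod_integral(2)[OF hi])
    also have "\<dots> = (\<integral>x. std_normal_density x * x\<^sup>2 \<partial>lborel) * (\<integral>x. std_normal_density x \<partial>lborel) ^ (DIM('a) - 1)"
      by (rule prod_modify_int[OF b0, of std_normal_density "\<lambda>x. x\<^sup>2"])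
    finally show ?thesis using integral_std_normal_moment_even[of 1] by simp
  qed
qed

lemma Maxw_lin:
  fixes x :: "'a::euclidean_space"
  shows "integrable lborel (\<lambda>u::'a. (x \<bullet> u) * Maxw u)" "(\<integral>u. (x \<bullet> u) * Maxw (u::'a) \<partial>lborel) = 0"
proof -
  have e: "(x \<bullet> u) * Maxw u = (\<Sum>b\<in>Basis. (x \<bullet> b) * ((u \<bullet> b) * Maxw u))" for u
    by (simp add: euclidean_inner[of x u] sum_distrib_right sum_distrib_left mult_ac)
  show "integrable lborel (\<lambda>u::'a. (x \<bullet> u) * Maxw u)"
    unfolding e by (intro Bochner_Integration.integrable_sum integrable_mult_right Maxw_int1)
  show "(\<integral>u. (x \<bullet> u) * Maxw (u::'a) \<partial>lborel) = 0"
    unfolding e by (subst Bochner_Integration.integral_sum) (auto intro!: integrable_mult_right Maxw_int1 simp: Maxw_int1(2))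
qed

lemma Maxw_sq:
  shows "integrable lborel (\<lambda>u::'a::euclidean_space. (norm u)\<^sup>2 * Maxw u)"
    "(\<integral>u. (norm u)\<^sup>2 * Maxw (u::'a) \<partial>lborel) = real DIM('a)"
proof -
  have e: "(norm u)\<^sup>2 * Maxw u = (\<Sum>b\<in>Basis. (u \<bullet> b)\<^sup>2 * Maxw u)" for u :: 'a
  proof -
    have "norm u * norm u = u \<bullet> u" by (simp add: power2_norm_eq_inner[symmetric] power2_eq_square)
    then show ?thesis by (simp add: euclidean_inner[of u u] sum_distrib_right power2_eq_square)
  qed
  show "integrable lborel (\<lambda>u::'a::euclidean_space. (norm u)\<^sup>2 * Maxw u)"
    unfolding e by (intro Bochner_Integration.integrable_sum Maxw_int2)
  show "(\<integral>u. (norm u)\<^sup>2 * Maxw (u::'a) \<partial>lborel) = real DIM('a)"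
    unfolding e by (subst Bochner_Integration.integral_sum) (auto intro!: Maxw_int2 simp: Maxw_int2(2))
qed

definition Vf :: "('a::euclidean_space \<Rightarrow> real) \<Rightarrow> 'a \<Rightarrow> 'a \<Rightarrow> real" where
  "Vf Phi x v = 1 + Phi x + (norm v) ^ 2 / 2 + (x \<bullet> v) / 4 + (norm x) ^ 2 / 8"

lemma Vf_Maxw_eq: "(Vf Phi x u + c) * Maxw u =
   (1 + Phi x + (norm x)^2/8 + c) * Maxw u + (1/2) * ((norm u)\<^sup>2 * Maxw u) + (1/4) * ((x \<bullet> u) * Maxw u)"
  by (simp add: Vf_def algebra_simps)

lemma Vf_int:
  "integrable lborel (\<lambda>u. (Vf Phi x u + c) * Maxw u)"
  "(\<integral>u. (Vf Phi x u + c) * Maxw (u::'a::euclidean_space) \<partial>lborel) = 1 + Phi x + real DIM('a)/2 + (norm x)^2/8 + c"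
   apply (unfold Vf_Maxw_eq)
   apply (intro Bochner_Integration.integrable_add integrable_mult_right Maxw_int Maxw_sq Maxw_lin)
  apply (subst Bochner_Integration.integral_add, (intro Bochner_Integration.integrable_add integrable_mult_right Maxw_int Maxw_sq Maxw_lin)+)+
  apply (simp add: Maxw_int Maxw_sq Maxw_lin)
  done


lemma Vf_deriv:
  assumes "(Phi has_derivative (\<lambda>h. g \<bullet> h)) (at x)"
  shows "((\<lambda>z. Vf Phi (fst z) (snd z)) has_derivative
      (\<lambda>(h,k). g \<bullet> h + v \<bullet> k + (h \<bullet> v + x \<bullet> k)/4 + (x \<bullet> h)/4)) (at (x,v))"
proof -
  have dP: "((\<lambda>z. Phi (fst z)) has_derivative (\<lambda>z. g \<bullet> fst z)) (at (x,v))"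
  proof -
    have a: "(Phi has_derivative (\<lambda>h. g \<bullet> h)) (at (fst (x,v)))" using assms by simp
    show ?thesis using has_derivative_compose[OF has_derivative_fst[OF has_derivative_ident] a] by simp
  qed
  have e: "(\<lambda>z. Vf Phi (fst z) (snd z)) = (\<lambda>z. 1 + Phi (fst z) + (1/2) * (snd z \<bullet> snd z) + (1/4) * (fst z \<bullet> snd z) + (1/8) * (fst z \<bullet> fst z))"
    by (auto simp: Vf_def power2_norm_eq_inner)
  show ?thesis unfolding e
    apply (rule has_derivative_eq_rhs)
     apply (rule has_derivative_add)+
         apply (rule has_derivative_const)
        apply (rule dP)
       apply (rule has_derivative_mult_right has_derivative_inner has_derivative_fst has_derivative_snd has_derivative_ident)+
    apply (auto simp: algebra_simps inner_commute fun_eq_iff split: prod.splits)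
    done
qed

lemma lyap_ineq:
  fixes a b c P G d A g1 g2 p0 lam :: real
  assumes "\<bar>c\<bar> \<le> (a+b)/2" "a \<ge> 0" "b \<ge> 0" "P \<ge> p0" "p0 \<le> 0" "G \<ge> g1*a + g2*P - A" "g1 > 0" "g2 > 0"
    and lam: "lam = min (min g1 (g2/4)) (1/4)"
  shows "d/2 - b/4 - G/4 \<le> - lam * (1 + P + b/2 + c/4 + a/8) + (d/2 + A/4 + 1 + g2*(-p0))"
proof -
  have l0: "lam > 0" "lam \<le> g1" "lam \<le> g2/4" "lam \<le> 1/4" using assms by (auto simp: lam)
  have f1: "lam * c \<le> lam * ((a+b)/2)"
  proof -
    have "c \<le> (a+b)/2" using assms(1) by linarith
    then show "lam * c \<le> lam * ((a+b)/2)" using l0 by (intro mult_left_mono) auto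
  qed
  have f2: "(g2/4 - lam) * (P - p0) \<ge> 0" using l0 assms by auto
  have f3: "(g1 - lam) * a \<ge> 0" using l0 assms by auto
  have f4: "(1/4 - lam) * b \<ge> 0" using l0 assms by auto
  have f5: "(g2/4 + lam) * (-p0) \<ge> 0" using l0 assms by (intro mult_nonneg_nonneg) auto
  have f7: "g2 * p0 \<le> 0" "lam * p0 \<le> 0" using l0 assms by (auto simp: mult_nonneg_nonpos)
  have f6: "lam * b \<ge> 0" "lam * a \<ge> 0" using l0 assms by auto
  have h1: "lam*c \<le> lam*a/2 + lam*b/2" using f1 by (simp add: distrib_left add_divide_distrib)
  have h2: "lam*P \<le> g2*P/4 - g2*p0/4 + lam*p0" using f2 by (simp add: algebra_simps diff_divide_distrib)
  have h3: "lam*a \<le> g1*a" using f3 by (simp add: algebra_simps)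
  have h4: "lam*b \<le> b/4" using f4 by (simp add: algebra_simps)
  have e: "- lam * (1 + P + b/2 + c/4 + a/8) = -(lam + lam*P + lam*b/2 + lam*c/4 + lam*a/8)"
    by (simp add: algebra_simps)
  have e2: "g2*(-p0) = - (g2*p0)" by simp
  show ?thesis unfolding e e2 using h1 h2 h3 h4 f6 f7 l0 assms(3,6) by linarith
qed

lemma inner_half: "\<bar>x \<bullet> v\<bar> \<le> ((norm x)\<^sup>2 + (norm (v::'a::real_inner))\<^sup>2) / 2"
proof -
  have "\<bar>x \<bullet> v\<bar> \<le> norm x * norm v" by (rule Cauchy_Schwarz_ineq2)
  moreover have "0 \<le> (norm x - norm v)\<^sup>2" by simp
  ultimately show ?thesis by (simp add: power2_eq_square algebra_simps)
qed

lemma V_eq_Vf: "V = (\<lambda>(x, v). 1 + Phi x + (norm v) ^ 2 / 2 + (x \<bullet> v) / 4 + (norm x) ^ 2 / 8) \<Longrightarrow>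
   V = (\<lambda>z. Vf Phi (fst z) (snd z))"
  by (auto simp: fun_eq_iff Vf_def)

lemma Ugen_V:
  fixes x :: "'a::euclidean_space"
  assumes grad: "\<forall>x. (Phi has_derivative (\<lambda>h. gradPhi x \<bullet> h)) (at x)"
  shows "Ugen gradPhi (\<lambda>z. Vf Phi (fst z) (snd z)) (x,v) = real DIM('a)/2 - (norm v)^2/4 - (x \<bullet> gradPhi x)/4"
    (is "?U = _")
proof -
  note d = Vf_deriv[OF grad[rule_format, of x], of v]
  have fd: "frechet_derivative (\<lambda>z. Vf Phi (fst z) (snd z)) (at (x,v))
      = (\<lambda>(h,k). gradPhi x \<bullet> h + v \<bullet> k + (h \<bullet> v + x \<bullet> k)/4 + (x \<bullet> h)/4)"
    using frechet_derivative_at[OF d] by simp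
  have L: "Lstar (\<lambda>z. Vf Phi (fst z) (snd z)) (x,v) = (1 + Phi x + real DIM('a)/2 + (norm x)^2/8) - Vf Phi x v"
    using Vf_int(2)[of Phi x 0] by (simp add: Lstar_def)
  have "?U = frechet_derivative (\<lambda>z. Vf Phi (fst z) (snd z)) (at (x,v)) (v, - gradPhi x)
      + Lstar (\<lambda>z. Vf Phi (fst z) (snd z)) (x,v)" by (simp add: Ugen_def)
  also have "\<dots> = gradPhi x \<bullet> v + v \<bullet> (- gradPhi x) + (v \<bullet> v + x \<bullet> (- gradPhi x))/4 + (x \<bullet> v)/4
      + ((1 + Phi x + real DIM('a)/2 + (norm x)^2/8) - Vf Phi x v)"
    unfolding fd L by simp
  also have "\<dots> = real DIM('a)/2 - (norm v)^2/4 - (x \<bullet> gradPhi x)/4"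
    by (simp add: Vf_def power2_norm_eq_inner inner_commute algebra_simps add_divide_distrib diff_divide_distrib)
  finally show ?thesis .
qed

definition Tf :: "('a::euclidean_space \<Rightarrow> 'a) \<Rightarrow> 'a \<Rightarrow> 'a \<Rightarrow> real" where
  "Tf gradPhi x v = (v \<bullet> v)/4 - (x \<bullet> gradPhi x)/4 + (x \<bullet> v)/4"

lemma is_flowD:
  assumes "is_flow gradPhi \<Psi>"
  shows "\<Psi> 0 z = z"
    and "0 \<le> t \<Longrightarrow> ((\<lambda>s. \<Psi> s z) has_vector_derivative (snd (\<Psi> t z), - gradPhi (fst (\<Psi> t z)))) (at t within {0..})"
  using assms unfolding is_flow_def by blast+

lemma flow_cont:
  assumes flow: "is_flow gradPhi \<Psi>"
  shows "continuous_on {0..} (\<lambda>s. \<Psi> s z)"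
  unfolding continuous_on_eq_continuous_within
proof
  fix s :: real assume "s \<in> {0..}"
  then have "((\<lambda>s. \<Psi> s z) has_vector_derivative (snd (\<Psi> s z), - gradPhi (fst (\<Psi> s z)))) (at s within {0..})"
    using is_flowD(2)[OF flow] by auto
  then show "continuous (at s within {0..}) (\<lambda>s. \<Psi> s z)" by (rule has_vector_derivative_continuous)
qed

lemma flow_Vderiv:
  assumes flow: "is_flow gradPhi \<Psi>" and grad: "\<forall>x. (Phi has_derivative (\<lambda>h. gradPhi x \<bullet> h)) (at x)"
    and r: "0 \<le> r"
  shows "((\<lambda>s. Vf Phi (fst (\<Psi> s z)) (snd (\<Psi> s z))) has_real_derivative
           Tf gradPhi (fst (\<Psi> r z)) (snd (\<Psi> r z))) (at r within {0..})"
proof -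
  obtain X Y where XY: "\<Psi> r z = (X, Y)" by (cases "\<Psi> r z")
  have f: "((\<lambda>s. \<Psi> s z) has_vector_derivative (Y, - gradPhi X)) (at r within {0..})"
    using is_flowD(2)[OF flow r, of z] XY by simp
  then have f': "((\<lambda>s. \<Psi> s z) has_derivative (\<lambda>h. h *\<^sub>R (Y, - gradPhi X))) (at r within {0..})"
    by (simp add: has_vector_derivative_def)
  have g: "((\<lambda>z. Vf Phi (fst z) (snd z)) has_derivative
      (\<lambda>(h,k). gradPhi X \<bullet> h + Y \<bullet> k + (h \<bullet> Y + X \<bullet> k)/4 + (X \<bullet> h)/4)) (at (\<Psi> r z))"
    unfolding XY by (rule Vf_deriv[OF grad[rule_format]])
  have "((\<lambda>s. Vf Phi (fst (\<Psi> s z)) (snd (\<Psi> s z))) has_derivative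
     (\<lambda>h. (\<lambda>(h,k). gradPhi X \<bullet> h + Y \<bullet> k + (h \<bullet> Y + X \<bullet> k)/4 + (X \<bullet> h)/4) (h *\<^sub>R (Y, - gradPhi X)))) (at r within {0..})"
    using has_derivative_compose[OF f' g] by simp
  then show ?thesis unfolding has_field_derivative_def XY Tf_def
    by (rule has_derivative_eq_rhs) (auto simp: fun_eq_iff algebra_simps inner_commute diff_divide_distrib add_divide_distrib)
qed

lemma le_alg:
  fixes q e lam T E Vm K2 :: real
  assumes "q > 0" "e > 0" "T + E - Vm \<le> - lam * Vm + K2"
  shows "q * (e * E + K2 / lam * (1 - e)) \<le> - (- q * (e * Vm + K2 / lam * (1 - e)) + q * (lam * e * Vm + e * T - K2 * e))"
proof -
  have eq: "- (- q * (e * Vm + K2 / lam * (1 - e)) + q * (lam * e * Vm + e * T - K2 * e)) - q * (e * E + K2 / lam * (1 - e))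
     = q * e * (- lam * Vm + K2 - (T + E - Vm))" by (simp add: algebra_simps add_divide_distrib[symmetric])
  have "0 \<le> q * e * (- lam * Vm + K2 - (T + E - Vm))" using assms by (intro mult_nonneg_nonneg) auto
  then show ?thesis using eq by linarith
qed

lemma mild_real:
  fixes \<Psi> :: "real \<Rightarrow> 'a::euclidean_space \<times> 'a \<Rightarrow> 'a \<times> 'a"
    and z :: "'a \<times> 'a"
  assumes flow: "is_flow gradPhi \<Psi>" and grad: "\<forall>x. (Phi has_derivative (\<lambda>h. gradPhi x \<bullet> h)) (at x)"
    and lam: "lam > 0" and tau: "0 \<le> \<tau>"
    and LY: "\<And>x v. Tf gradPhi x v + (1 + Phi x + real DIM('a)/2 + (norm x)^2/8 + m) - (Vf Phi x v + m)
                \<le> - lam * (Vf Phi x v + m) + K2"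
  defines "H \<equiv> \<lambda>s. exp (- lam * (\<tau> - s)) * (1 + Phi (fst (\<Psi> s z)) + real DIM('a)/2 + (norm (fst (\<Psi> s z)))^2/8 + m)
                  + K2 / lam * (1 - exp (- lam * (\<tau> - s)))"
  shows "continuous_on {0..\<tau>} (\<lambda>s. exp (- s) * H s)"
    and "exp (- \<tau>) * (Vf Phi (fst (\<Psi> \<tau> z)) (snd (\<Psi> \<tau> z)) + m) + integral {0..\<tau>} (\<lambda>s. exp (- s) * H s)
         \<le> exp (- lam * \<tau>) * (Vf Phi (fst z) (snd z) + m) + K2 / lam * (1 - exp (- lam * \<tau>))"
proof -
  have cPsi: "continuous_on {0..\<tau>} (\<lambda>s. \<Psi> s z)"
    by (rule continuous_on_subset[OF flow_cont[OF flow]]) auto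
  have cPhi: "continuous_on UNIV Phi"
    using grad by (intro has_derivative_continuous_on) auto
  have cX: "continuous_on {0..\<tau>} (\<lambda>s. fst (\<Psi> s z))" by (intro continuous_intros cPsi)
  have cP: "continuous_on {0..\<tau>} (\<lambda>s. Phi (fst (\<Psi> s z)))"
    by (rule continuous_on_compose2[OF cPhi cX]) auto
  show cH: "continuous_on {0..\<tau>} (\<lambda>s. exp (- s) * H s)"
    unfolding H_def by (intro continuous_intros cP cX cPsi) auto
  let ?Vm = "\<lambda>s. Vf Phi (fst (\<Psi> s z)) (snd (\<Psi> s z)) + m"
  let ?T = "\<lambda>s. Tf gradPhi (fst (\<Psi> s z)) (snd (\<Psi> s z))"
  define G where "G = (\<lambda>r. exp (- r) * (exp (- lam * (\<tau> - r)) * ?Vm r + K2 / lam * (1 - exp (- lam * (\<tau> - r)))))"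
  define G' where "G' = (\<lambda>r. - exp (- r) * (exp (- lam * (\<tau> - r)) * ?Vm r + K2 / lam * (1 - exp (- lam * (\<tau> - r))))
        + exp (- r) * (lam * exp (- lam * (\<tau> - r)) * ?Vm r + exp (- lam * (\<tau> - r)) * ?T r - K2 * exp (- lam * (\<tau> - r))))"
  have dV: "((\<lambda>s. Vf Phi (fst (\<Psi> s z)) (snd (\<Psi> s z))) has_real_derivative ?T r) (at r within {0..\<tau>})" if "r \<in> {0..\<tau>}" for r
  proof -
    have "((\<lambda>s. Vf Phi (fst (\<Psi> s z)) (snd (\<Psi> s z))) has_real_derivative ?T r) (at r within {0..})"
      using flow_Vderiv[OF flow grad, of r z] that by auto
    then show ?thesis
      by (rule has_field_derivative_subset) auto
  qed
  have dG: "(G has_vector_derivative G' r) (at r within {0..\<tau>})" if "r \<in> {0..\<tau>}" for r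
    unfolding has_real_derivative_iff_has_vector_derivative[symmetric] G_def
    apply (rule DERIV_cong)
     apply (rule derivative_eq_intros dV[OF that] refl)+
    using lam apply (simp add: G'_def field_simps)
    done
  have ftc: "(G' has_integral (G \<tau> - G 0)) {0..\<tau>}"
    by (rule fundamental_theorem_of_calculus[OF tau dG]) auto
  have le: "exp (- s) * H s \<le> - G' s" if "s \<in> {0..\<tau>}" for s
  proof -
    have "?T s + (1 + Phi (fst (\<Psi> s z)) + real DIM('a)/2 + (norm (fst (\<Psi> s z)))^2/8 + m) - ?Vm s \<le> - lam * ?Vm s + K2"
      using LY by simp
    from le_alg[OF exp_gt_zero exp_gt_zero this, of "- s" "- lam * (\<tau> - s)"]
    show ?thesis unfolding H_def G'_def by simp
  qed
  have "integral {0..\<tau>} (\<lambda>s. exp (- s) * H s) \<le> - (G \<tau> - G 0)"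
    by (rule has_integral_le[OF integrable_integral[OF integrable_continuous_interval[OF cH]] has_integral_neg[OF ftc] le])
  moreover have "G 0 = exp (- lam * \<tau>) * (Vf Phi (fst z) (snd z) + m) + K2 / lam * (1 - exp (- lam * \<tau>))"
    using is_flowD(1)[OF flow, of z] by (simp add: G_def)
  moreover have "G \<tau> = exp (- \<tau>) * (Vf Phi (fst (\<Psi> \<tau> z)) (snd (\<Psi> \<tau> z)) + m)"
    by (simp add: G_def)
  ultimately show "exp (- \<tau>) * (Vf Phi (fst (\<Psi> \<tau> z)) (snd (\<Psi> \<tau> z)) + m) + integral {0..\<tau>} (\<lambda>s. exp (- s) * H s)
         \<le> exp (- lam * \<tau>) * (Vf Phi (fst z) (snd z) + m) + K2 / lam * (1 - exp (- lam * \<tau>))"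
    by simp
qed

lemma u_int:
  fixes x :: "'a::euclidean_space"
  assumes Vm: "\<And>u. 0 \<le> Vf Phi x u + m" and a: "0 \<le> a" and c: "0 \<le> c"
  shows "(\<integral>\<^sup>+u. ennreal (a * (Vf Phi x u + m) + c) * ennreal (Maxw u) \<partial>lborel)
     = ennreal (a * (1 + Phi x + real DIM('a)/2 + (norm x)^2/8 + m) + c)"
proof -
  have nn: "0 \<le> a * (Vf Phi x u + m) + c" for u using Vm[of u] a c by simp
  have e: "(a * (Vf Phi x u + m) + c) * Maxw u = a * ((Vf Phi x u + m) * Maxw u) + c * Maxw u" for u
    by (simp add: algebra_simps)
  have int: "integrable lborel (\<lambda>u::'a. (a * (Vf Phi x u + m) + c) * Maxw u)"
    unfolding e by (intro Bochner_Integration.integrable_add integrable_mult_right Vf_int Maxw_int)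
  have "(\<integral>\<^sup>+u. ennreal (a * (Vf Phi x u + m) + c) * ennreal (Maxw u) \<partial>lborel)
      = (\<integral>\<^sup>+u. ennreal ((a * (Vf Phi x u + m) + c) * Maxw u) \<partial>lborel)"
    by (intro nn_integral_cong) (simp add: ennreal_mult[OF nn Maxw_nonneg])
  also have "\<dots> = ennreal (\<integral>u. (a * (Vf Phi x u + m) + c) * Maxw u \<partial>lborel)"
    by (rule nn_integral_eq_integral[OF int]) (auto intro!: mult_nonneg_nonneg nn Maxw_nonneg)
  also have "(\<integral>u. (a * (Vf Phi x u + m) + c) * Maxw u \<partial>lborel) = a * (1 + Phi x + real DIM('a)/2 + (norm x)^2/8 + m) + c"
    unfolding e
    by (subst Bochner_Integration.integral_add) (auto intro!: integrable_mult_right Vf_int Maxw_int simp: Vf_int(2) Maxw_int(2))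
  finally show ?thesis .
qed

lemma s_int:
  fixes f :: "real \<Rightarrow> real"
  assumes cf: "continuous_on {0..\<tau>} f" and nn: "\<And>s. s \<in> {0..\<tau>} \<Longrightarrow> 0 \<le> f s"
  shows "(\<integral>\<^sup>+s. ennreal (f s) * indicator {0..\<tau>} s \<partial>lborel) = ennreal (integral {0..\<tau>} f)"
proof -
  have si: "set_integrable lborel {0..\<tau>} f" by (rule borel_integrable_atLeastAtMost'[OF cf])
  have "(\<integral>\<^sup>+s. ennreal (f s) * indicator {0..\<tau>} s \<partial>lborel) = (\<integral>\<^sup>+s. ennreal (indicator {0..\<tau>} s *\<^sub>R f s) \<partial>lborel)"
    by (intro nn_integral_cong) (simp split: split_indicator)
  also have "\<dots> = ennreal (\<integral>s. indicator {0..\<tau>} s *\<^sub>R f s \<partial>lborel)"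
    using si unfolding set_integrable_def
    by (rule nn_integral_eq_integral) (auto split: split_indicator intro!: nn)
  also have "(\<integral>s. indicator {0..\<tau>} s *\<^sub>R f s \<partial>lborel) = integral {0..\<tau>} f"
    using set_borel_integral_eq_integral(2)[OF si] unfolding set_lebesgue_integral_def .
  finally show ?thesis .
qed

lemma dyson_bound:
  fixes \<Psi> :: "real \<Rightarrow> 'a::euclidean_space \<times> 'a \<Rightarrow> 'a \<times> 'a"
  assumes flow: "is_flow gradPhi \<Psi>" and grad: "\<forall>x. (Phi has_derivative (\<lambda>h. gradPhi x \<bullet> h)) (at x)"
    and lam: "lam > 0" and K2: "K2 \<ge> 0"
    and Vm: "\<And>x u. 0 \<le> Vf Phi x u + m"
    and Enn: "\<And>x. 0 \<le> 1 + Phi x + real DIM('a)/2 + (norm x)^2/8 + m"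
    and LY: "\<And>x v. Tf gradPhi x v + (1 + Phi x + real DIM('a)/2 + (norm x)^2/8 + m) - (Vf Phi x v + m)
                \<le> - lam * (Vf Phi x v + m) + K2"
  shows "\<forall>\<tau>\<ge>0. \<forall>z. ennreal (exp (- \<tau>)) * (\<Sum>n<N. dyson \<Psi> n \<tau> (\<lambda>y. ennreal (Vf Phi (fst y) (snd y) + m)) z)
            \<le> ennreal (exp (- lam * \<tau>) * (Vf Phi (fst z) (snd z) + m) + K2 / lam * (1 - exp (- lam * \<tau>)))"
proof (induction N)
  case 0
  then show ?case by simp
next
  case (Suc N)
  let ?\<phi> = "\<lambda>y. ennreal (Vf Phi (fst y) (snd y) + m)"
  let ?S = "\<lambda>\<tau> z. (\<Sum>n<N. dyson \<Psi> n \<tau> ?\<phi> z)"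
  let ?W = "\<lambda>\<tau> z. exp (- lam * \<tau>) * (Vf Phi (fst z) (snd z) + m) + K2 / lam * (1 - exp (- lam * \<tau>))"
  show ?case
  proof (intro allI impI)
    fix \<tau> :: real and z :: "'a \<times> 'a"
    assume tau: "0 \<le> \<tau>"
    define H where "H \<equiv> \<lambda>s. exp (- lam * (\<tau> - s)) * (1 + Phi (fst (\<Psi> s z)) + real DIM('a)/2 + (norm (fst (\<Psi> s z)))^2/8 + m)
                  + K2 / lam * (1 - exp (- lam * (\<tau> - s)))"
    let ?I = "\<lambda>n s. (\<integral>\<^sup>+u. dyson \<Psi> n (\<tau> - s) ?\<phi> (fst (\<Psi> s z), u) * ennreal (Maxw u) \<partial>lborel)"
    let ?J = "\<lambda>s. (\<integral>\<^sup>+u. ?S (\<tau> - s) (fst (\<Psi> s z), u) * ennreal (Maxw u) \<partial>lborel)"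
    have Hnn: "0 \<le> H s" if "s \<in> {0..\<tau>}" for s
    proof -
      have "0 \<le> exp (- lam * (\<tau> - s)) * (1 + Phi (fst (\<Psi> s z)) + real DIM('a)/2 + (norm (fst (\<Psi> s z)))^2/8 + m)"
        using Enn[of "fst (\<Psi> s z)"] by simp
      moreover have "exp (- lam * (\<tau> - s)) \<le> 1" using that lam by auto
      then have "0 \<le> K2 / lam * (1 - exp (- lam * (\<tau> - s)))" using lam K2 by (intro mult_nonneg_nonneg) auto
      ultimately show ?thesis unfolding H_def by linarith
    qed
    have sum1: "(\<Sum>n<N. dyson \<Psi> (Suc n) \<tau> ?\<phi> z) \<le> (\<integral>\<^sup>+s. ?J s * indicator {0..\<tau>} s \<partial>lborel)"
    proof -
      have "(\<Sum>n<N. dyson \<Psi> (Suc n) \<tau> ?\<phi> z) = (\<Sum>n<N. \<integral>\<^sup>+s. ?I n s * indicator {0..\<tau>} s \<partial>lborel)"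
        by simp
      also have "\<dots> \<le> (\<integral>\<^sup>+s. (\<Sum>n<N. ?I n s * indicator {0..\<tau>} s) \<partial>lborel)"
        by (rule nn_sum_le) simp
      also have "\<dots> \<le> (\<integral>\<^sup>+s. ?J s * indicator {0..\<tau>} s \<partial>lborel)"
      proof (rule nn_integral_mono)
        fix s
        have "(\<Sum>n<N. ?I n s) \<le> (\<integral>\<^sup>+u. (\<Sum>n<N. dyson \<Psi> n (\<tau> - s) ?\<phi> (fst (\<Psi> s z), u) * ennreal (Maxw u)) \<partial>lborel)"
          by (rule nn_sum_le) simp
        also have "\<dots> = ?J s" by (simp add: sum_distrib_right)
        finally have "(\<Sum>n<N. ?I n s) \<le> ?J s" .
        then show "(\<Sum>n<N. ?I n s * indicator {0..\<tau>} s) \<le> ?J s * indicator {0..\<tau>} s"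
          by (simp add: sum_distrib_right[symmetric] mult_right_mono)
      qed
      finally show ?thesis .
    qed
    have pt: "ennreal (exp (- \<tau>)) * (?J s * indicator {0..\<tau>} s) \<le> ennreal (exp (- s) * H s) * indicator {0..\<tau>} s" for s
    proof (cases "s \<in> {0..\<tau>}")
      case False then show ?thesis by simp
    next
      case True
      then have ts: "0 \<le> \<tau> - s" by auto
      have "ennreal (exp (- (\<tau> - s))) * ?J s
          \<le> (\<integral>\<^sup>+u. ennreal (exp (- (\<tau> - s))) * (?S (\<tau> - s) (fst (\<Psi> s z), u) * ennreal (Maxw u)) \<partial>lborel)"
        by (rule nn_cmult_le)
      also have "\<dots> \<le> (\<integral>\<^sup>+u. ennreal (?W (\<tau> - s) (fst (\<Psi> s z), u)) * ennreal (Maxw u) \<partial>lborel)"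
      proof (rule nn_integral_mono)
        fix u
        have "ennreal (exp (- (\<tau> - s))) * ?S (\<tau> - s) (fst (\<Psi> s z), u) \<le> ennreal (?W (\<tau> - s) (fst (\<Psi> s z), u))"
          using Suc.IH ts by blast
        then show "ennreal (exp (- (\<tau> - s))) * (?S (\<tau> - s) (fst (\<Psi> s z), u) * ennreal (Maxw u))
            \<le> ennreal (?W (\<tau> - s) (fst (\<Psi> s z), u)) * ennreal (Maxw u)"
          by (simp add: mult.assoc[symmetric] mult_right_mono)
      qed
      also have "\<dots> = ennreal (H s)"
        unfolding H_def using u_int[OF Vm, of "exp (- lam * (\<tau> - s))" "K2 / lam * (1 - exp (- lam * (\<tau> - s)))" "fst (\<Psi> s z)"]
          lam K2 ts by (simp add: divide_nonneg_nonneg)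
      finally have a: "ennreal (exp (- (\<tau> - s))) * ?J s \<le> ennreal (H s)" .
      have "ennreal (exp (- \<tau>)) = ennreal (exp (- s)) * ennreal (exp (- (\<tau> - s)))"
        by (simp add: ennreal_mult[symmetric] exp_add[symmetric])
      then have "ennreal (exp (- \<tau>)) * ?J s = ennreal (exp (- s)) * (ennreal (exp (- (\<tau> - s))) * ?J s)"
        by (simp add: mult.assoc)
      also have "\<dots> \<le> ennreal (exp (- s)) * ennreal (H s)" by (rule mult_left_mono[OF a]) simp
      also have "\<dots> = ennreal (exp (- s) * H s)" by (rule ennreal_mult'[symmetric]) simp
      finally show ?thesis using True by simp
    qed
    have cH: "continuous_on {0..\<tau>} (\<lambda>s. exp (- s) * H s)"
      using mild_real(1)[OF flow grad lam tau LY, of z] unfolding H_def .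
    have i0: "0 \<le> integral {0..\<tau>} (\<lambda>s. exp (- s) * H s)"
      by (rule integral_nonneg[OF integrable_continuous_interval[OF cH]]) (auto intro!: mult_nonneg_nonneg Hnn)
    have v0: "0 \<le> Vf Phi (fst (\<Psi> \<tau> z)) (snd (\<Psi> \<tau> z)) + m" by (rule Vm)
    have "ennreal (exp (- \<tau>)) * (\<Sum>n<Suc N. dyson \<Psi> n \<tau> ?\<phi> z)
        = ennreal (exp (- \<tau>)) * ?\<phi> (\<Psi> \<tau> z) + ennreal (exp (- \<tau>)) * (\<Sum>n<N. dyson \<Psi> (Suc n) \<tau> ?\<phi> z)"
      by (simp only: sum.lessThan_Suc_shift distrib_left dyson.simps(1))
    also have "\<dots> \<le> ennreal (exp (- \<tau>)) * ?\<phi> (\<Psi> \<tau> z) + ennreal (exp (- \<tau>)) * (\<integral>\<^sup>+s. ?J s * indicator {0..\<tau>} s \<partial>lborel)"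
      by (intro add_left_mono mult_left_mono sum1) simp
    also have "\<dots> \<le> ennreal (exp (- \<tau>)) * ?\<phi> (\<Psi> \<tau> z) + (\<integral>\<^sup>+s. ennreal (exp (- \<tau>)) * (?J s * indicator {0..\<tau>} s) \<partial>lborel)"
      by (intro add_left_mono nn_cmult_le)
    also have "\<dots> \<le> ennreal (exp (- \<tau>)) * ?\<phi> (\<Psi> \<tau> z) + (\<integral>\<^sup>+s. ennreal (exp (- s) * H s) * indicator {0..\<tau>} s \<partial>lborel)"
      by (intro add_left_mono nn_integral_mono pt)
    also have "(\<integral>\<^sup>+s. ennreal (exp (- s) * H s) * indicator {0..\<tau>} s \<partial>lborel) = ennreal (integral {0..\<tau>} (\<lambda>s. exp (- s) * H s))"
    proof -
      show ?thesis by (rule s_int[OF cH]) (auto intro!: mult_nonneg_nonneg Hnn)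
    qed
    also have "ennreal (exp (- \<tau>)) * ?\<phi> (\<Psi> \<tau> z) + ennreal (integral {0..\<tau>} (\<lambda>s. exp (- s) * H s))
        = ennreal (exp (- \<tau>) * (Vf Phi (fst (\<Psi> \<tau> z)) (snd (\<Psi> \<tau> z)) + m) + integral {0..\<tau>} (\<lambda>s. exp (- s) * H s))"
      using i0 v0 by (simp add: ennreal_mult' ennreal_plus)
    also have "\<dots> \<le> ennreal (?W \<tau> z)"
      using mild_real(2)[OF flow grad lam tau LY, of z] unfolding H_def by (rule ennreal_leI)
    finally show "ennreal (exp (- \<tau>)) * (\<Sum>n<Suc N. dyson \<Psi> n \<tau> ?\<phi> z) \<le> ennreal (?W \<tau> z)" .
  qed
qed

lemma dyson_mono:
  assumes "\<And>y. f y \<le> g y"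
  shows "dyson \<Psi> n t f z \<le> dyson \<Psi> n t g z"
  using assms
proof (induction n arbitrary: t z)
  case 0 then show ?case by simp
next
  case (Suc n)
  show ?case
    by (simp, intro nn_integral_mono mult_right_mono Suc.IH Suc.prems) simp_all
qed

lemma Pplus_mono:
  assumes "\<And>y. f y \<le> g y"
  shows "Pplus \<Psi> t f z \<le> Pplus \<Psi> t g z"
  unfolding Pplus_def
  by (intro mult_left_mono suminf_le[OF _ summableI summableI] dyson_mono assms) simp

lemma Pplus_le:
  assumes "\<And>N. ennreal (exp (- t)) * (\<Sum>n<N. dyson \<Psi> n t f z) \<le> B"
  shows "Pplus \<Psi> t f z \<le> B"
proof -
  have "Pplus \<Psi> t f z = (\<Sum>n. ennreal (exp (- t)) * dyson \<Psi> n t f z)"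
    unfolding Pplus_def by simp
  also have "\<dots> \<le> B"
    using ennreal_suminf_bound_add[of "\<lambda>n. ennreal (exp (- t)) * dyson \<Psi> n t f z" 0 B] assms
    by (simp add: sum_distrib_left)
  finally show ?thesis .
qed

theorem mainTheorem11:
  fixes Phi :: "'a::euclidean_space \<Rightarrow> real" and gradPhi :: "'a \<Rightarrow> 'a"
    and HessPhi :: "'a \<Rightarrow> 'a \<Rightarrow>\<^sub>L 'a" and \<gamma>1 \<gamma>2 A :: real
    and V :: "'a \<times> 'a \<Rightarrow> real"
  assumes grad: "\<forall>x. (Phi has_derivative (\<lambda>h. gradPhi x \<bullet> h)) (at x)"
    and hess: "\<forall>x. (gradPhi has_derivative blinfun_apply (HessPhi x)) (at x)"
    and hess_cont: "continuous_on UNIV HessPhi"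
    and bdd: "bdd_below (range Phi)"
    and pos: "\<gamma>1 > 0" "\<gamma>2 > 0" "A > 0"
    and drift: "\<forall>x. x \<bullet> gradPhi x \<ge> \<gamma>1 * (norm x) ^ 2 + \<gamma>2 * Phi x - A"
    and V_def: "V = (\<lambda>(x, v). 1 + Phi x + (norm v) ^ 2 / 2 + (x \<bullet> v) / 4 + (norm x) ^ 2 / 8)"
  shows "\<exists>lam>0. \<exists>K\<ge>0.
           (\<forall>z. Ugen gradPhi V z \<le> - lam * V z + K) \<and>
           (\<forall>\<Psi>. is_flow gradPhi \<Psi> \<longrightarrow>
              (\<forall>t>0. \<forall>z. Pplus \<Psi> t (\<lambda>y. ennreal (V y)) z \<noteq> \<infinity> \<and>
                         Pdual \<Psi> t V z \<le> exp (- lam * t) * V z + K / lam))"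
proof -
  obtain b where b: "\<And>x. b \<le> Phi x" using bdd by (auto simp: bdd_below_def)
  define p0 where "p0 = min b 0"
  have p0: "\<And>x. p0 \<le> Phi x" "p0 \<le> 0" using b by (auto simp: p0_def min_le_iff_disj)
  define lam where "lam = min (min \<gamma>1 (\<gamma>2/4)) (1/4)"
  define K where "K = real DIM('a)/2 + A/4 + 1 + \<gamma>2*(-p0)"
  define m where "m = - p0"
  define K2 where "K2 = K + lam * m"
  define Kf where "Kf = K + 2 * lam * m"
  have lam0: "lam > 0" using pos by (simp add: lam_def)
  have m0: "m \<ge> 0" using p0 by (simp add: m_def)
  have K0: "K \<ge> 0"
  proof -
    have "\<gamma>2 * p0 \<le> 0" using p0 pos by (simp add: mult_nonneg_nonpos)
    then show ?thesis using pos by (simp add: K_def)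
  qed
  have K20: "K2 \<ge> 0" using K0 lam0 m0 by (simp add: K2_def)
  have Kf0: "Kf \<ge> 0" using K0 lam0 m0 by (simp add: Kf_def)
  have VV: "V = (\<lambda>z. Vf Phi (fst z) (snd z))" by (rule V_eq_Vf[OF V_def])
  have key: "real DIM('a)/2 - (norm v)^2/4 - (x \<bullet> gradPhi x)/4 \<le> - lam * Vf Phi x v + K" for x v
  proof -
    have "real DIM('a)/2 - (norm v)^2/4 - (x \<bullet> gradPhi x)/4
       \<le> - lam * (1 + Phi x + (norm v)^2/2 + (x \<bullet> v)/4 + (norm x)^2/8) + (real DIM('a)/2 + A/4 + 1 + \<gamma>2*(-p0))"
      by (rule lyap_ineq[OF inner_half _ _ p0(1) p0(2) _ pos(1) pos(2) lam_def])
         (use drift in auto)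
    then show ?thesis by (simp add: Vf_def K_def)
  qed
  have Vm: "0 \<le> Vf Phi x u + m" for x u
  proof -
    have "\<bar>x \<bullet> u\<bar> \<le> ((norm x)\<^sup>2 + (norm u)\<^sup>2) / 2" by (rule inner_half)
    then have "- (x \<bullet> u) \<le> ((norm x)\<^sup>2 + (norm u)\<^sup>2) / 2" by linarith
    then show ?thesis using p0(1)[of x] zero_le_power2[of "norm u"] zero_le_power2[of "norm x"]
      unfolding Vf_def m_def by argo
  qed
  have Enn: "0 \<le> 1 + Phi x + real DIM('a)/2 + (norm x)^2/8 + m" for x
  proof -
    have "0 \<le> real DIM('a)" by simp
    then show ?thesis using p0(1)[of x] zero_le_power2[of "norm x"] unfolding m_def by argo
  qed
  have LY: "Tf gradPhi x v + (1 + Phi x + real DIM('a)/2 + (norm x)^2/8 + m) - (Vf Phi x v + m)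
                \<le> - lam * (Vf Phi x v + m) + K2" for x v
  proof -
    have "Tf gradPhi x v + (1 + Phi x + real DIM('a)/2 + (norm x)^2/8 + m) - (Vf Phi x v + m)
        = real DIM('a)/2 - (norm v)^2/4 - (x \<bullet> gradPhi x)/4"
      by (simp add: Tf_def Vf_def power2_norm_eq_inner algebra_simps)
    also have "\<dots> \<le> - lam * Vf Phi x v + K" by (rule key)
    also have "\<dots> = - lam * (Vf Phi x v + m) + K2" by (simp add: K2_def algebra_simps)
    finally show ?thesis .
  qed
  have part1: "\<forall>z. Ugen gradPhi V z \<le> - lam * V z + Kf"
  proof
    fix z :: "'a \<times> 'a"
    obtain x v where z: "z = (x, v)" by (cases z)
    have "Ugen gradPhi V z = real DIM('a)/2 - (norm v)^2/4 - (x \<bullet> gradPhi x)/4"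
      unfolding VV z by (rule Ugen_V[OF grad])
    also have "\<dots> \<le> - lam * V z + K" using key[of v x] by (simp add: VV z)
    also have "\<dots> \<le> - lam * V z + Kf" using lam0 m0 by (simp add: Kf_def)
    finally show "Ugen gradPhi V z \<le> - lam * V z + Kf" .
  qed
  have part2: "Pplus \<Psi> t (\<lambda>y. ennreal (V y)) z \<noteq> \<infinity> \<and> Pdual \<Psi> t V z \<le> exp (- lam * t) * V z + Kf / lam"
    if flow: "is_flow gradPhi \<Psi>" and t: "t > 0" for \<Psi> t z
  proof -
    let ?\<phi> = "\<lambda>y. ennreal (Vf Phi (fst y) (snd y) + m)"
    define W where "W = exp (- lam * t) * (Vf Phi (fst z) (snd z) + m) + K2 / lam * (1 - exp (- lam * t))"
    have db: "ennreal (exp (- t)) * (\<Sum>n<N. dyson \<Psi> n t ?\<phi> z) \<le> ennreal W" for N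
      using dyson_bound[OF flow grad lam0 K20 Vm Enn LY, of N, rule_format, of t z] t unfolding W_def by simp
    have P1: "Pplus \<Psi> t ?\<phi> z \<le> ennreal W" by (rule Pplus_le[OF db])
    have P2: "Pplus \<Psi> t (\<lambda>y. ennreal (V y)) z \<le> Pplus \<Psi> t ?\<phi> z"
      by (rule Pplus_mono) (simp add: VV m0 ennreal_leI)
    have Pl: "Pplus \<Psi> t (\<lambda>y. ennreal (V y)) z \<le> ennreal W" using P1 P2 by (rule order_trans[rotated])
    have fin: "Pplus \<Psi> t (\<lambda>y. ennreal (V y)) z \<noteq> \<infinity>"
      using Pl by (metis ennreal_less_top infinity_ennreal_def linorder_not_le top.not_eq_extremum)
    have W0: "0 \<le> W"
    proof -
      have "exp (- lam * t) \<le> 1" using lam0 t by auto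
      then have "0 \<le> K2 / lam * (1 - exp (- lam * t))" using lam0 K20 by (intro mult_nonneg_nonneg) auto
      moreover have "0 \<le> exp (- lam * t) * (Vf Phi (fst z) (snd z) + m)" using Vm by simp
      ultimately show ?thesis unfolding W_def by linarith
    qed
    have "Pdual \<Psi> t V z \<le> enn2real (Pplus \<Psi> t (\<lambda>y. ennreal (V y)) z)"
      unfolding Pdual_def by simp
    also have "\<dots> \<le> W" by (rule enn2real_leI[OF W0 Pl])
    also have "\<dots> \<le> exp (- lam * t) * V z + Kf / lam"
    proof -
      have e1: "exp (- lam * t) \<le> 1" using lam0 t by auto
      have "exp (- lam * t) * m \<le> m" using e1 m0 by (simp add: mult_left_le_one_le)
      moreover have "K2 / lam * (1 - exp (- lam * t)) \<le> K2 / lam * 1"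
        using lam0 K20 t by (intro mult_left_mono) auto
      then have "K2 / lam * (1 - exp (- lam * t)) \<le> K2 / lam" by simp
      moreover have "Kf / lam = K2 / lam + m" using lam0 by (simp add: Kf_def K2_def field_simps)
      ultimately show ?thesis unfolding W_def VV by (simp add: algebra_simps)
    qed
    finally show ?thesis using fin by simp
  qed
  show ?thesis
    by (rule exI[of _ lam], rule conjI[OF lam0], rule exI[of _ Kf], rule conjI[OF Kf0])
       (use part1 part2 in blast)
qed

end
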